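(* Let $(Y,D)$ be binary random variables and $Z$ a random vector; write $q_{ij}(z)=\mathbb P(Y=i,D=j\mid Z=z)$. In the generalized binary Roy model the following hold. (1) If $(Y_0,Y_1)$ is a pair of binary random variables independent of $Z$ with $Y=Y_1D+Y_0(1-D)$, then for almost all $z\in\mathrm{Supp}(Z)$: $$\begin{aligned} &0\le \mathbb P(Y_0=1,Y_1=1)\le q_{10}(z)+q_{11}(z),\qquad 0\le \mathbb P(Y_0=0,Y_1=0)\le q_{00}(z)+q_{01}(z),\\ &0\le \mathbb P(Y_0=1,Y_1=0)\le q_{10}(z)+q_{01}(z),\qquad 0\le \mathbb P(Y_0=0,Y_1=1)\le q_{00}(z)+q_{11}(z),\\ &q_{10}(z)\le \mathbb P(Y_0=1)\le 1-q_{00}(z),\qquad q_{11}(z)\le \mathbb P(Y_1=1)\le 1-q_{01}(z). \end{aligned}$$ (2) Conversely, if $(p_{00},p_{01},p_{10},p_{11})$ is a probability vector such that for almost all $z\in\mathrm{Supp}(Z)$: $p_{11}\le q_{10}(z)+q_{11}(z)$, $p_{00}\le q_{00}(z)+q_{01}(z)$, $p_{10}\le q_{10}(z)+q_{01}(z)$, $p_{01}\le q_{00}(z)+q_{11}(z)$, $q_{10}(z)\le p_{10}+p_{11}\le 1-q_{00}(z)$, $q_{11}(z)\le p_{01}+p_{11}\le 1-q_{01}(z)$, then there exist, on some probability space, random variables $(\tilde Y,\tilde D,\tilde Z,Y_0,Y_1)$ with $(\tilde Y,\tilde D,\tilde Z)$ distributed as $(Y,D,Z)$, $(Y_0,Y_1)$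 binary and independent of $\tilde Z$, $\tilde Y=Y_1\tilde D+Y_0(1-\tilde D)$, and $\mathbb P(Y_0=i,Y_1=j)=p_{ij}$ for all $i,j$.
   Context: Generalized binary Roy model: observed $Y$ and $D\in\{0,1\}$, unobserved binary potential outcomes $(Y_0,Y_1)$ (possibly dependent) with $Y=Y_1D+Y_0(1-D)$; no restriction is placed on how $D$ is selected, except for the exclusion restriction that the observed variable $Z$ affects sector selection but not outcomes, i.e. $(Y_0,Y_1)$ is independent of $Z$. $\mathrm{Supp}(Z)$ is the support of $Z$. *)

theory Defs
  imports "HOL-Probability.Probability"
begin

text \<open>Binary random variables are modelled as bool-valued (True = 1, False = 0).\<close>

definition cond_prob_YD_given_Z ::
  "'a measure \<Rightarrow> ('a \<Rightarrow> bool) \<Rightarrow> ('a \<Rightarrow> bool) \<Rightarrow> ('a \<Rightarrow> 'z::euclidean_space)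
     \<Rightarrow> (bool \<Rightarrow> bool \<Rightarrow> 'z \<Rightarrow> real) \<Rightarrow> bool" where
  "cond_prob_YD_given_Z M Y D Z q \<longleftrightarrow>
     (\<forall>i j. q i j \<in> borel_measurable borel \<and>
        integrable (distr M borel Z) (q i j) \<and>
        (\<forall>B \<in> sets borel.
           measure M {\<omega> \<in> space M. Y \<omega> = i \<and> D \<omega> = j \<and> Z \<omega> \<in> B}
             = (LINT z:B|distr M borel Z. q i j z)))"

text \<open>Independence of two random variables with possibly different codomains
  (the library's indep_var requires a common codomain type); this is exactly the
  library's indep_var definition unfolded: the generated sigma-algebras are independent.\<close>

definition indep_rv :: "'a measure \<Rightarrow> 'b measure \<Rightarrow> ('a \<Rightarrow> 'b) \<Rightarrow> 'c measure \<Rightarrow> ('a \<Rightarrow> 'c) \<Rightarrow> bool" where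
  "indep_rv M Ma X Mb W \<longleftrightarrow>
     X \<in> measurable M Ma \<and> W \<in> measurable M Mb \<and>
     prob_space.indep_set M {X -` A \<inter> space M | A. A \<in> sets Ma}
                            {W -` B \<inter> space M | B. B \<in> sets Mb}"

end

theory Submission
  imports Defs
begin


lemma ae_nonneg_from_sets:
  fixes f :: "'b \<Rightarrow> real"
  assumes f: "integrable N f" and h: "\<And>B. B \<in> sets N \<Longrightarrow> 0 \<le> (LINT z:B|N. f z)"
  shows "AE z in N. 0 \<le> f z"
proof -
  have fm[measurable]: "f \<in> borel_measurable N" using f by auto
  define B where "B = {z\<in>space N. f z < 0}"
  have Bs: "B \<in> sets N" unfolding B_def by measurable
  define g where "g = (\<lambda>z. - (indicator B z *\<^sub>R f z))"
  have gi: "integrable N g" unfolding g_def using integrable_mult_indicator[OF Bs f] by auto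
  have gn: "AE z in N. 0 \<le> g z" unfolding g_def B_def by (auto split: split_indicator)
  have "integral\<^sup>L N g \<le> 0" using h[OF Bs] unfolding g_def set_lebesgue_integral_def by simp
  moreover have "0 \<le> integral\<^sup>L N g" using gn by (simp add: integral_nonneg_AE)
  ultimately have "integral\<^sup>L N g = 0" by simp
  then have "AE z in N. g z = 0" using integral_nonneg_eq_0_iff_AE[OF gi gn] by simp
  then show ?thesis using AE_space
    by eventually_elim (auto simp: g_def B_def split: split_indicator_asm)
qed

lemma ae_le_from_sets:
  fixes f :: "'b \<Rightarrow> real"
  assumes N: "finite_measure N" and f: "integrable N f"
    and h: "\<And>B. B \<in> sets N \<Longrightarrow> c * measure N B \<le> (LINT z:B|N. f z)"
  shows "AE z in N. c \<le> f z"
proof -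
  interpret finite_measure N by fact
  have "AE z in N. 0 \<le> f z - c"
  proof (rule ae_nonneg_from_sets)
    show "integrable N (\<lambda>z. f z - c)" using f by auto
    fix B assume B: "B \<in> sets N"
    have si: "set_integrable N B f" unfolding set_integrable_def using integrable_mult_indicator[OF B f] .
    have sc: "set_integrable N B (\<lambda>_. c)" unfolding set_integrable_def
      using integrable_mult_indicator[OF B, of "\<lambda>_. c"] by auto
    have "(LINT z:B|N. f z - c) = (LINT z:B|N. f z) - measure N B * c"
      using set_integral_diff(2)[OF si sc] set_integral_const[OF B, of c] by (simp add: emeasure_eq_measure)
    then show "0 \<le> (LINT z:B|N. f z - c)" using h[OF B] by (simp add: mult.commute)
  qed
  then show ?thesis by eventually_elim simp
qed

lemma ae_ge_from_sets:
  fixes f :: "'b \<Rightarrow> real"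
  assumes N: "finite_measure N" and f: "integrable N f"
    and h: "\<And>B. B \<in> sets N \<Longrightarrow> (LINT z:B|N. f z) \<le> c * measure N B"
  shows "AE z in N. f z \<le> c"
proof -
  have "AE z in N. -c \<le> - f z"
  proof (rule ae_le_from_sets[OF N])
    show "integrable N (\<lambda>z. - f z)" using f by auto
    fix B assume B: "B \<in> sets N"
    have "(LINT z:B|N. - f z) = - (LINT z:B|N. f z)"
      by (rule set_integral_uminus) (use integrable_mult_indicator[OF B f] in \<open>simp add: set_integrable_def\<close>)
    then show "- c * measure N B \<le> (LINT z:B|N. - f z)" using h[OF B] by simp
  qed
  then show ?thesis by eventually_elim simp
qed



lemma part1:
  fixes M :: "'a measure"
    and Y D :: "'a \<Rightarrow> bool"
    and Z :: "'a \<Rightarrow> 'z::euclidean_space"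
    and q :: "bool \<Rightarrow> bool \<Rightarrow> 'z \<Rightarrow> real"
    and Y0 Y1 :: "'a \<Rightarrow> bool"
  assumes PM: "prob_space M"
    and Ym[measurable]: "Y \<in> measurable M (count_space UNIV)"
    and Dm[measurable]: "D \<in> measurable M (count_space UNIV)"
    and Zm[measurable]: "Z \<in> borel_measurable M"
    and cp: "cond_prob_YD_given_Z M Y D Z q"
    and Y0m[measurable]: "Y0 \<in> measurable M (count_space UNIV)"
    and Y1m[measurable]: "Y1 \<in> measurable M (count_space UNIV)"
    and ind: "indep_rv M borel Z (count_space UNIV) (\<lambda>\<omega>. (Y0 \<omega>, Y1 \<omega>))"
    and cons: "\<forall>\<omega>\<in>space M. Y \<omega> = (if D \<omega> then Y1 \<omega> else Y0 \<omega>)"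
  shows "AE z in distr M borel Z.
          (let P = (\<lambda>a b. measure M {\<omega> \<in> space M. Y0 \<omega> = a \<and> Y1 \<omega> = b}) in
           0 \<le> P True True \<and> P True True \<le> q True False z + q True True z \<and>
           0 \<le> P False False \<and> P False False \<le> q False False z + q False True z \<and>
           0 \<le> P True False \<and> P True False \<le> q True False z + q False True z \<and>
           0 \<le> P False True \<and> P False True \<le> q False False z + q True True z \<and>
           q True False z \<le> measure M {\<omega> \<in> space M. Y0 \<omega>} \<and>
           measure M {\<omega> \<in> space M. Y0 \<omega>} \<le> 1 - q False False z \<and>
           q True True z \<le> measure M {\<omega> \<in> space M. Y1 \<omega>} \<and>
           measure M {\<omega> \<in> space M. Y1 \<omega>} \<le> 1 - q False True z)"
proof -
  interpret prob_space M by fact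
  define N where "N = distr M borel Z"
  have FN: "finite_measure N" unfolding N_def
    by (intro prob_space.finite_measure prob_space_distr) simp
  have sN: "sets N = sets borel" unfolding N_def by simp
  have muN: "measure N B = prob (Z -` B \<inter> space M)" if "B \<in> sets borel" for B
    unfolding N_def using that by (simp add: measure_distr)
  have qint: "integrable N (q i j)" for i j using cp unfolding cond_prob_YD_given_Z_def N_def by auto
  have qeq: "prob {\<omega> \<in> space M. Y \<omega> = i \<and> D \<omega> = j \<and> Z \<omega> \<in> B} = (LINT z:B|N. q i j z)"
    if "B \<in> sets borel" for i j B using cp that unfolding cond_prob_YD_given_Z_def N_def by auto
  define W where "W = (\<lambda>\<omega>. (Y0 \<omega>, Y1 \<omega>))"
  have Wm[measurable]: "W \<in> measurable M (count_space UNIV)" unfolding W_def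
    by (simp add: measurable_pair_iff)
  have ev: "{\<omega> \<in> space M. P \<omega>} \<in> events" if "Measurable.pred M P" for P using that by auto
  have iset: "indep_set {Z -` A \<inter> space M | A. A \<in> sets borel} {W -` B \<inter> space M | B. B \<in> sets (count_space UNIV)}"
    using ind unfolding indep_rv_def W_def by auto
  have indep: "prob {\<omega> \<in> space M. W \<omega> \<in> S \<and> Z \<omega> \<in> B} = prob {\<omega> \<in> space M. W \<omega> \<in> S} * measure N B"
    if B: "B \<in> sets borel" for S B
  proof -
    have "prob ((Z -` B \<inter> space M) \<inter> (W -` S \<inter> space M)) = prob (Z -` B \<inter> space M) * prob (W -` S \<inter> space M)"
      apply (rule indep_setD[OF iset])
      subgoal using B by blast
      subgoal by (intro CollectI exI[of _ S]) simp
      done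
    moreover have "(Z -` B \<inter> space M) \<inter> (W -` S \<inter> space M) = {\<omega> \<in> space M. W \<omega> \<in> S \<and> Z \<omega> \<in> B}" by auto
    moreover have "W -` S \<inter> space M = {\<omega> \<in> space M. W \<omega> \<in> S}" by auto
    ultimately show ?thesis using muN[OF B] by simp
  qed
  define P where "P = (\<lambda>a b. measure M {\<omega> \<in> space M. Y0 \<omega> = a \<and> Y1 \<omega> = b})"
  have A1: "AE z in N. P a b \<le> q a False z + q b True z" for a b
  proof (rule ae_le_from_sets[OF FN])
    show "integrable N (\<lambda>z. q a False z + q b True z)" using qint by auto
    fix B assume B: "B \<in> sets N"
    then have Bb: "B \<in> sets borel" using sN by auto
    note Bb[measurable]
    have "P a b * measure N B = prob {\<omega> \<in> space M. W \<omega> \<in> {(a,b)} \<and> Z \<omega> \<in> B}"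
      using indep[OF Bb, of "{(a,b)}"] unfolding P_def W_def by simp
    also have "\<dots> \<le> prob ({\<omega> \<in> space M. Y \<omega> = a \<and> D \<omega> = False \<and> Z \<omega> \<in> B} \<union> {\<omega> \<in> space M. Y \<omega> = b \<and> D \<omega> = True \<and> Z \<omega> \<in> B})"
    proof (rule finite_measure_mono)
      show "{\<omega> \<in> space M. W \<omega> \<in> {(a,b)} \<and> Z \<omega> \<in> B} \<subseteq> {\<omega> \<in> space M. Y \<omega> = a \<and> D \<omega> = False \<and> Z \<omega> \<in> B} \<union> {\<omega> \<in> space M. Y \<omega> = b \<and> D \<omega> = True \<and> Z \<omega> \<in> B}"
      proof (intro subsetI)
        fix \<omega> assume "\<omega> \<in> {\<omega> \<in> space M. W \<omega> \<in> {(a,b)} \<and> Z \<omega> \<in> B}"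
        then have h: "\<omega> \<in> space M" "Y0 \<omega> = a" "Y1 \<omega> = b" "Z \<omega> \<in> B" unfolding W_def by auto
        have "Y \<omega> = (if D \<omega> then Y1 \<omega> else Y0 \<omega>)" using cons h(1) by blast
        then show "\<omega> \<in> {\<omega> \<in> space M. Y \<omega> = a \<and> D \<omega> = False \<and> Z \<omega> \<in> B} \<union> {\<omega> \<in> space M. Y \<omega> = b \<and> D \<omega> = True \<and> Z \<omega> \<in> B}"
          using h by (cases "D \<omega>") simp_all
      qed
    qed measurable
    also have "\<dots> \<le> prob {\<omega> \<in> space M. Y \<omega> = a \<and> D \<omega> = False \<and> Z \<omega> \<in> B} + prob {\<omega> \<in> space M. Y \<omega> = b \<and> D \<omega> = True \<and> Z \<omega> \<in> B}"
      by (rule measure_Un_le) measurable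
    also have "\<dots> = (LINT z:B|N. q a False z + q b True z)"
    proof -
      have "(LINT z:B|N. q a False z + q b True z) = (LINT z:B|N. q a False z) + (LINT z:B|N. q b True z)"
        by (rule set_integral_add(2)) (use integrable_mult_indicator[OF B qint] in \<open>simp_all add: set_integrable_def\<close>)
      then show ?thesis using qeq[OF Bb, of a False] qeq[OF Bb, of b True] by simp
    qed
    finally show "P a b * measure N B \<le> (LINT z:B|N. q a False z + q b True z)" .
  qed
  have A2: "AE z in N. q a False z \<le> prob {\<omega> \<in> space M. Y0 \<omega> = a}" for a
  proof (rule ae_ge_from_sets[OF FN qint])
    fix B assume B: "B \<in> sets N"
    then have Bb[measurable]: "B \<in> sets borel" using sN by auto
    have "(LINT z:B|N. q a False z) = prob {\<omega> \<in> space M. Y \<omega> = a \<and> D \<omega> = False \<and> Z \<omega> \<in> B}"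
      using qeq[OF Bb, of a False] qeq[OF Bb, of b True] by simp
    also have "\<dots> \<le> prob {\<omega> \<in> space M. W \<omega> \<in> {p. fst p = a} \<and> Z \<omega> \<in> B}"
    proof (rule finite_measure_mono)
      show "{\<omega> \<in> space M. Y \<omega> = a \<and> D \<omega> = False \<and> Z \<omega> \<in> B} \<subseteq> {\<omega> \<in> space M. W \<omega> \<in> {p. fst p = a} \<and> Z \<omega> \<in> B}"
      proof (intro subsetI)
        fix \<omega> assume "\<omega> \<in> {\<omega> \<in> space M. Y \<omega> = a \<and> D \<omega> = False \<and> Z \<omega> \<in> B}"
        then have h: "\<omega> \<in> space M" "Y \<omega> = a" "D \<omega> = False" "Z \<omega> \<in> B" by auto
        have "Y \<omega> = (if D \<omega> then Y1 \<omega> else Y0 \<omega>)" using cons h(1) by blast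
        then show "\<omega> \<in> {\<omega> \<in> space M. W \<omega> \<in> {p. fst p = a} \<and> Z \<omega> \<in> B}"
          using h unfolding W_def by simp
      qed
    qed (simp add: W_def, measurable)
    also have "\<dots> = prob {\<omega> \<in> space M. Y0 \<omega> = a} * measure N B"
      using indep[OF Bb, of "{p. fst p = a}"] unfolding W_def by simp
    finally show "(LINT z:B|N. q a False z) \<le> prob {\<omega> \<in> space M. Y0 \<omega> = a} * measure N B" .
  qed
  have A3: "AE z in N. q b True z \<le> prob {\<omega> \<in> space M. Y1 \<omega> = b}" for b
  proof (rule ae_ge_from_sets[OF FN qint])
    fix B assume B: "B \<in> sets N"
    then have Bb[measurable]: "B \<in> sets borel" using sN by auto
    have "(LINT z:B|N. q b True z) = prob {\<omega> \<in> space M. Y \<omega> = b \<and> D \<omega> = True \<and> Z \<omega> \<in> B}"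
      using qeq[OF Bb, of a False] qeq[OF Bb, of b True] by simp
    also have "\<dots> \<le> prob {\<omega> \<in> space M. W \<omega> \<in> {p. snd p = b} \<and> Z \<omega> \<in> B}"
    proof (rule finite_measure_mono)
      show "{\<omega> \<in> space M. Y \<omega> = b \<and> D \<omega> = True \<and> Z \<omega> \<in> B} \<subseteq> {\<omega> \<in> space M. W \<omega> \<in> {p. snd p = b} \<and> Z \<omega> \<in> B}"
      proof (intro subsetI)
        fix \<omega> assume "\<omega> \<in> {\<omega> \<in> space M. Y \<omega> = b \<and> D \<omega> = True \<and> Z \<omega> \<in> B}"
        then have h: "\<omega> \<in> space M" "Y \<omega> = b" "D \<omega> = True" "Z \<omega> \<in> B" by auto
        have "Y \<omega> = (if D \<omega> then Y1 \<omega> else Y0 \<omega>)" using cons h(1) by blast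
        then show "\<omega> \<in> {\<omega> \<in> space M. W \<omega> \<in> {p. snd p = b} \<and> Z \<omega> \<in> B}"
          using h unfolding W_def by simp
      qed
    qed (simp add: W_def, measurable)
    also have "\<dots> = prob {\<omega> \<in> space M. Y1 \<omega> = b} * measure N B"
      using indep[OF Bb, of "{p. snd p = b}"] unfolding W_def by simp
    finally show "(LINT z:B|N. q b True z) \<le> prob {\<omega> \<in> space M. Y1 \<omega> = b} * measure N B" .
  qed
  have c0: "prob {\<omega> \<in> space M. Y0 \<omega> = False} = 1 - prob {\<omega> \<in> space M. Y0 \<omega>}"
  proof -
    have "{\<omega> \<in> space M. Y0 \<omega> = False} = space M - {\<omega> \<in> space M. Y0 \<omega>}" by auto
    then show ?thesis by (simp add: prob_compl)
  qed
  have c1: "prob {\<omega> \<in> space M. Y1 \<omega> = False} = 1 - prob {\<omega> \<in> space M. Y1 \<omega>}"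
  proof -
    have "{\<omega> \<in> space M. Y1 \<omega> = False} = space M - {\<omega> \<in> space M. Y1 \<omega>}" by auto
    then show ?thesis by (simp add: prob_compl)
  qed
  have "AE z in N. P True True \<le> q True False z + q True True z \<and>
           P False False \<le> q False False z + q False True z \<and>
           P True False \<le> q True False z + q False True z \<and>
           P False True \<le> q False False z + q True True z \<and>
           q True False z \<le> prob {\<omega> \<in> space M. Y0 \<omega> = True} \<and>
           q False False z \<le> prob {\<omega> \<in> space M. Y0 \<omega> = False} \<and>
           q True True z \<le> prob {\<omega> \<in> space M. Y1 \<omega> = True} \<and>
           q False True z \<le> prob {\<omega> \<in> space M. Y1 \<omega> = False}"
    using A1[of True True] A1[of False False] A1[of True False] A1[of False True]
      A2[of True] A2[of False] A3[of True] A3[of False]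
    by eventually_elim auto
  then show ?thesis unfolding N_def[symmetric] P_def[symmetric] Let_def
    by eventually_elim (insert c0 c1, auto simp: P_def)
qed



lemma sum_UNIV_bool2: "(\<Sum>y\<in>(UNIV::(bool\<times>bool) set). f y) = f (True,True) + f (True,False) + f (False,True) + f (False,False)"
proof -
  have e: "(UNIV::(bool\<times>bool) set) = {(True,True),(True,False),(False,True),(False,False)}" by auto
  show ?thesis by (subst e) (simp add: ac_simps)
qed

lemma mix_construction:
  fixes M :: "'a measure" and w :: "'a \<Rightarrow> bool \<Rightarrow> real"
  assumes PM: "prob_space M"
    and wm[measurable]: "\<And>c. (\<lambda>\<omega>. w \<omega> c) \<in> borel_measurable M"
    and wn: "\<And>\<omega> c. 0 \<le> w \<omega> c"
    and ws: "\<And>\<omega>. w \<omega> True + w \<omega> False = 1"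
  defines "M' \<equiv> density (M \<Otimes>\<^sub>M count_space UNIV) (\<lambda>x. ennreal (w (fst x) (fst (snd x))) * indicator {True} (snd (snd x)))"
  shows "sets M' = sets (M \<Otimes>\<^sub>M count_space UNIV)"
    and "space M' = space M \<times> UNIV"
    and "\<And>X. X \<in> sets M' \<Longrightarrow> emeasure M' X = (\<integral>\<^sup>+\<omega>. ennreal (w \<omega> True) * indicator X (\<omega>,True,True) + ennreal (w \<omega> False) * indicator X (\<omega>,False,True) \<partial>M)"
    and "prob_space M'"
    and "distr M' M fst = M"
proof -
  interpret prob_space M by fact
  interpret C: sigma_finite_measure "count_space (UNIV :: (bool\<times>bool) set)"
    by (rule sigma_finite_measure_count_space)
  have m1[measurable]: "(\<lambda>x. fst (snd x)) \<in> (M \<Otimes>\<^sub>M count_space (UNIV :: (bool\<times>bool) set)) \<rightarrow>\<^sub>M count_space UNIV"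
    by (rule measurable_compose[OF measurable_snd]) simp
  have m2[measurable]: "(\<lambda>x. snd (snd x)) \<in> (M \<Otimes>\<^sub>M count_space (UNIV :: (bool\<times>bool) set)) \<rightarrow>\<^sub>M count_space UNIV"
    by (rule measurable_compose[OF measurable_snd]) simp
  have m0: "(\<lambda>x. ennreal (w (fst x) c)) \<in> borel_measurable (M \<Otimes>\<^sub>M count_space (UNIV :: (bool\<times>bool) set))" for c
    by (rule measurable_compose[OF measurable_fst]) (rule measurable_compose[OF wm], simp)
  have m3: "(\<lambda>x. ennreal (w (fst x) (fst (snd x)))) \<in> borel_measurable (M \<Otimes>\<^sub>M count_space (UNIV :: (bool\<times>bool) set))"
    by (rule measurable_compose_countable[where f="\<lambda>c x. ennreal (w (fst x) c)", OF m0 m1])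
  have fm[measurable]: "(\<lambda>x. ennreal (w (fst x) (fst (snd x))) * indicator {True} (snd (snd x))) \<in> borel_measurable (M \<Otimes>\<^sub>M count_space (UNIV :: (bool\<times>bool) set))"
    by (rule borel_measurable_times_ennreal[OF m3 measurable_compose[OF m2]]) simp
  show sM': "sets M' = sets (M \<Otimes>\<^sub>M count_space UNIV)" unfolding M'_def by simp
  show spM': "space M' = space M \<times> UNIV" unfolding M'_def by (simp add: space_pair_measure)
  show em: "emeasure M' X = (\<integral>\<^sup>+\<omega>. ennreal (w \<omega> True) * indicator X (\<omega>,True,True) + ennreal (w \<omega> False) * indicator X (\<omega>,False,True) \<partial>M)"
    if X: "X \<in> sets M'" for X
  proof -
    have X'[measurable]: "X \<in> sets (M \<Otimes>\<^sub>M count_space UNIV)" using X sM' by simp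
    have "emeasure M' X = (\<integral>\<^sup>+x. ennreal (w (fst x) (fst (snd x))) * indicator {True} (snd (snd x)) * indicator X x \<partial>(M \<Otimes>\<^sub>M count_space UNIV))"
      unfolding M'_def by (rule emeasure_density) measurable
    also have "\<dots> = (\<integral>\<^sup>+\<omega>. \<integral>\<^sup>+y. ennreal (w \<omega> (fst y)) * indicator {True} (snd y) * indicator X (\<omega>, y) \<partial>count_space UNIV \<partial>M)"
      by (subst C.nn_integral_fst[symmetric]) (rule borel_measurable_times_ennreal[OF fm borel_measurable_indicator[OF X']], simp)
    also have "\<dots> = (\<integral>\<^sup>+\<omega>. ennreal (w \<omega> True) * indicator X (\<omega>,True,True) + ennreal (w \<omega> False) * indicator X (\<omega>,False,True) \<partial>M)"
      by (intro nn_integral_cong) (simp add: nn_integral_count_space_finite sum_UNIV_bool2)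
    finally show ?thesis .
  qed
  have emA: "emeasure M' (A \<times> UNIV) = emeasure M A" if A[measurable]: "A \<in> sets M" for A
  proof -
    have "emeasure M' (A \<times> UNIV) = (\<integral>\<^sup>+\<omega>. indicator A \<omega> \<partial>M)"
    proof (subst em)
      show "A \<times> UNIV \<in> sets M'" using sM' by simp
      show "(\<integral>\<^sup>+\<omega>. ennreal (w \<omega> True) * indicator (A \<times> UNIV) (\<omega>,True,True) + ennreal (w \<omega> False) * indicator (A \<times> UNIV) (\<omega>,False,True) \<partial>M) = (\<integral>\<^sup>+\<omega>. indicator A \<omega> \<partial>M)"
      proof (intro nn_integral_cong)
        fix \<omega>
        have "ennreal (w \<omega> True) + ennreal (w \<omega> False) = 1"
          using ws[of \<omega>] wn[of \<omega>] by (simp add: ennreal_plus[symmetric])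
        then show "ennreal (w \<omega> True) * indicator (A \<times> UNIV) (\<omega>,True,True) + ennreal (w \<omega> False) * indicator (A \<times> UNIV) (\<omega>,False,True) = indicator A \<omega>"
          by (auto split: split_indicator)
      qed
    qed
    also have "\<dots> = emeasure M A" by simp
    finally show ?thesis .
  qed
  show "prob_space M'"
  proof
    have "emeasure M' (space M') = emeasure M' (space M \<times> UNIV)" using spM' by simp
    also have "\<dots> = emeasure M (space M)" by (rule emA) simp
    finally show "emeasure M' (space M') = 1" by (simp add: emeasure_space_1)
  qed
  show "distr M' M fst = M"
  proof (rule measure_eqI)
    show "sets (distr M' M fst) = sets M" by simp
    fix A assume A: "A \<in> sets (distr M' M fst)"
    then have A': "A \<in> sets M" by simp
    have fstm: "fst \<in> measurable M' M" unfolding measurable_cong_sets[OF sM' refl] by simp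
    have "fst -` A \<inter> space M' = A \<times> UNIV" using sets.sets_into_space[OF A'] spM' by auto
    then show "emeasure (distr M' M fst) A = emeasure M A"
      using emA[OF A'] by (simp add: emeasure_distr[OF fstm A'])
  qed
qed



lemma q_props:
  fixes M :: "'a measure" and Y D :: "'a \<Rightarrow> bool" and Z :: "'a \<Rightarrow> 'z::euclidean_space"
    and q :: "bool \<Rightarrow> bool \<Rightarrow> 'z \<Rightarrow> real"
  assumes PM: "prob_space M"
    and Ym[measurable]: "Y \<in> measurable M (count_space UNIV)"
    and Dm[measurable]: "D \<in> measurable M (count_space UNIV)"
    and Zm[measurable]: "Z \<in> borel_measurable M"
    and cp: "cond_prob_YD_given_Z M Y D Z q"
  shows "AE z in distr M borel Z. 0 \<le> q i j z"
    and "AE z in distr M borel Z. q False False z + q False True z + q True False z + q True True z = 1"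
proof -
  interpret prob_space M by fact
  define N where "N = distr M borel Z"
  have FN: "finite_measure N" unfolding N_def
    by (intro prob_space.finite_measure prob_space_distr) simp
  have sN: "sets N = sets borel" unfolding N_def by simp
  have muN: "measure N B = prob (Z -` B \<inter> space M)" if "B \<in> sets borel" for B
    unfolding N_def using that by (simp add: measure_distr)
  have qint: "integrable N (q i j)" for i j using cp unfolding cond_prob_YD_given_Z_def N_def by auto
  have qeq: "prob {\<omega> \<in> space M. Y \<omega> = i \<and> D \<omega> = j \<and> Z \<omega> \<in> B} = (LINT z:B|N. q i j z)"
    if "B \<in> sets borel" for i j B using cp that unfolding cond_prob_YD_given_Z_def N_def by auto
  show "AE z in distr M borel Z. 0 \<le> q i j z"
    unfolding N_def[symmetric]
  proof (rule ae_le_from_sets[OF FN qint])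
    fix B assume "B \<in> sets N"
    then have "B \<in> sets borel" using sN by simp
    then show "0 * measure N B \<le> (LINT z:B|N. q i j z)" using qeq[of B i j] measure_nonneg[of M "{\<omega> \<in> space M. Y \<omega> = i \<and> D \<omega> = j \<and> Z \<omega> \<in> B}"] by simp
  qed
  have "AE z in N. 1 \<le> q False False z + q False True z + q True False z + q True True z \<and>
       q False False z + q False True z + q True False z + q True True z \<le> 1"
  proof -
    have key: "(LINT z:B|N. q False False z + q False True z + q True False z + q True True z) = 1 * measure N B"
      if B: "B \<in> sets N" for B
    proof -
      have Bb[measurable]: "B \<in> sets borel" using B sN by simp
      have si: "set_integrable N B (q i j)" for i j
        using integrable_mult_indicator[OF B qint] by (simp add: set_integrable_def)
      have "(LINT z:B|N. q False False z + q False True z + q True False z + q True True z) =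
            (LINT z:B|N. q False False z) + (LINT z:B|N. q False True z) + (LINT z:B|N. q True False z) + (LINT z:B|N. q True True z)"
        using si by (simp add: set_integral_add)
      also have "\<dots> = prob {\<omega> \<in> space M. Y \<omega> = False \<and> D \<omega> = False \<and> Z \<omega> \<in> B} + prob {\<omega> \<in> space M. Y \<omega> = False \<and> D \<omega> = True \<and> Z \<omega> \<in> B}
          + prob {\<omega> \<in> space M. Y \<omega> = True \<and> D \<omega> = False \<and> Z \<omega> \<in> B} + prob {\<omega> \<in> space M. Y \<omega> = True \<and> D \<omega> = True \<and> Z \<omega> \<in> B}"
        using qeq[OF Bb, of False False] qeq[OF Bb, of False True] qeq[OF Bb, of True False] qeq[OF Bb, of True True] by simp
      also have "\<dots> = prob (Z -` B \<inter> space M)"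
      proof -
        let ?A = "\<lambda>i j. {\<omega> \<in> space M. Y \<omega> = i \<and> D \<omega> = j \<and> Z \<omega> \<in> B}"
        have ev: "?A i j \<in> events" for i j by measurable
        have "prob (?A False False \<union> ?A False True) = prob (?A False False) + prob (?A False True)"
          by (rule finite_measure_Union) (use ev in auto)
        moreover have "prob (?A True False \<union> ?A True True) = prob (?A True False) + prob (?A True True)"
          by (rule finite_measure_Union) (use ev in auto)
        moreover have "prob ((?A False False \<union> ?A False True) \<union> (?A True False \<union> ?A True True)) = prob (?A False False \<union> ?A False True) + prob (?A True False \<union> ?A True True)"
          by (rule finite_measure_Union) (use ev in auto)
        moreover have "(?A False False \<union> ?A False True) \<union> (?A True False \<union> ?A True True) = Z -` B \<inter> space M"
          by auto
        ultimately show ?thesis by simp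
      qed
      also have "\<dots> = 1 * measure N B" using muN[OF Bb] by simp
      finally show ?thesis .
    qed
    have i4: "integrable N (\<lambda>z. q False False z + q False True z + q True False z + q True True z)"
      using qint by auto
    have "AE z in N. 1 \<le> q False False z + q False True z + q True False z + q True True z"
      by (rule ae_le_from_sets[OF FN i4]) (simp add: key)
    moreover have "AE z in N. q False False z + q False True z + q True False z + q True True z \<le> 1"
      by (rule ae_ge_from_sets[OF FN i4]) (simp add: key)
    ultimately show ?thesis by eventually_elim simp
  qed
  then show "AE z in distr M borel Z. q False False z + q False True z + q True False z + q True True z = 1"
    unfolding N_def by eventually_elim simp
qed

lemma cell_integral:
  fixes M :: "'a measure" and Y D :: "'a \<Rightarrow> bool" and Z :: "'a \<Rightarrow> 'z::euclidean_space"
    and q :: "bool \<Rightarrow> bool \<Rightarrow> 'z \<Rightarrow> real" and h :: "'z \<Rightarrow> ennreal"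
  assumes PM: "prob_space M"
    and Ym[measurable]: "Y \<in> measurable M (count_space UNIV)"
    and Dm[measurable]: "D \<in> measurable M (count_space UNIV)"
    and Zm[measurable]: "Z \<in> borel_measurable M"
    and cp: "cond_prob_YD_given_Z M Y D Z q"
    and hm[measurable]: "h \<in> borel_measurable borel"
  shows "(\<integral>\<^sup>+\<omega>. indicator {\<omega> \<in> space M. Y \<omega> = i \<and> D \<omega> = j} \<omega> * h (Z \<omega>) \<partial>M)
       = (\<integral>\<^sup>+z. ennreal (q i j z) * h z \<partial>distr M borel Z)"
proof -
  interpret prob_space M by fact
  define N where "N = distr M borel Z"
  define C where "C = {\<omega> \<in> space M. Y \<omega> = i \<and> D \<omega> = j}"
  have Cs[measurable]: "C \<in> sets M" unfolding C_def by measurable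
  have qint: "integrable N (q i j)" using cp unfolding cond_prob_YD_given_Z_def N_def by auto
  have qm[measurable]: "q i j \<in> borel_measurable borel" using cp unfolding cond_prob_YD_given_Z_def by auto
  have qeq: "prob {\<omega> \<in> space M. Y \<omega> = i \<and> D \<omega> = j \<and> Z \<omega> \<in> B} = (LINT z:B|N. q i j z)"
    if "B \<in> sets borel" for B using cp that unfolding cond_prob_YD_given_Z_def N_def by auto
  have qnn: "AE z in N. 0 \<le> q i j z" unfolding N_def by (rule q_props(1)[OF PM Ym Dm Zm cp])
  have eq: "distr (density M (indicator C)) borel Z = density N (\<lambda>z. ennreal (q i j z))"
  proof (rule measure_eqI)
    show "sets (distr (density M (indicator C)) borel Z) = sets (density N (\<lambda>z. ennreal (q i j z)))"
      unfolding N_def by simp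
    fix B assume "B \<in> sets (distr (density M (indicator C)) borel Z)"
    then have B[measurable]: "B \<in> sets borel" by simp
    have "emeasure (distr (density M (indicator C)) borel Z) B = emeasure (density M (indicator C)) (Z -` B \<inter> space M)"
      by (subst emeasure_distr) auto
    also have "\<dots> = (\<integral>\<^sup>+\<omega>. indicator C \<omega> * indicator (Z -` B \<inter> space M) \<omega> \<partial>M)"
      by (rule emeasure_density) measurable
    also have "\<dots> = (\<integral>\<^sup>+\<omega>. indicator {\<omega> \<in> space M. Y \<omega> = i \<and> D \<omega> = j \<and> Z \<omega> \<in> B} \<omega> \<partial>M)"
      by (intro nn_integral_cong) (auto simp: C_def split: split_indicator)
    also have "\<dots> = ennreal (prob {\<omega> \<in> space M. Y \<omega> = i \<and> D \<omega> = j \<and> Z \<omega> \<in> B})"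
      by (simp add: emeasure_eq_measure)
    also have "\<dots> = ennreal (integral\<^sup>L N (\<lambda>z. indicator B z * q i j z))"
      using qeq[OF B] by (simp add: set_lebesgue_integral_def)
    also have "\<dots> = (\<integral>\<^sup>+z. ennreal (indicator B z * q i j z) \<partial>N)"
    proof (rule nn_integral_eq_integral[symmetric])
      show "integrable N (\<lambda>z. indicator B z * q i j z)"
        using integrable_mult_indicator[OF _ qint, of B] by (simp add: N_def)
      show "AE z in N. 0 \<le> indicator B z * q i j z" using qnn by eventually_elim simp
    qed
    also have "\<dots> = (\<integral>\<^sup>+z. ennreal (q i j z) * indicator B z \<partial>N)"
      using qnn by (intro nn_integral_cong_AE) (eventually_elim, simp split: split_indicator)
    also have "\<dots> = emeasure (density N (\<lambda>z. ennreal (q i j z))) B"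
      by (rule emeasure_density[symmetric]) (simp_all add: N_def)
    finally show "emeasure (distr (density M (indicator C)) borel Z) B = emeasure (density N (\<lambda>z. ennreal (q i j z))) B" .
  qed
  have "(\<integral>\<^sup>+\<omega>. indicator C \<omega> * h (Z \<omega>) \<partial>M) = (\<integral>\<^sup>+\<omega>. h (Z \<omega>) \<partial>density M (indicator C))"
    by (rule nn_integral_density[symmetric]) measurable
  also have "\<dots> = (\<integral>\<^sup>+z. h z \<partial>distr (density M (indicator C)) borel Z)"
    by (rule nn_integral_distr[symmetric]) simp_all
  also have "\<dots> = (\<integral>\<^sup>+z. h z \<partial>density N (\<lambda>z. ennreal (q i j z)))" by (simp add: eq)
  also have "\<dots> = (\<integral>\<^sup>+z. ennreal (q i j z) * h z \<partial>N)"
    by (rule nn_integral_density) (simp_all add: N_def)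
  finally show ?thesis unfolding C_def N_def .
qed



definition tt :: "(bool \<Rightarrow> bool \<Rightarrow> real) \<Rightarrow> real \<Rightarrow> real \<Rightarrow> real \<Rightarrow> real \<Rightarrow> real" where
  "tt p x y u v = max (max 0 (p False False - y)) (max (x - p False True) (p False False + p True False - y - u))"

definition massf :: "(bool \<Rightarrow> bool \<Rightarrow> real) \<Rightarrow> (bool \<Rightarrow> bool \<Rightarrow> real) \<Rightarrow> bool \<Rightarrow> bool \<Rightarrow> bool \<Rightarrow> real" where
  "massf p Q i j c = (let t = tt p (Q False False) (Q False True) (Q True False) (Q True True) in
     (if j then (if i then (if c then Q True True - (p False True - Q False False + t) else p False True - Q False False + t)
                else (if c then Q False True - (p False False - t) else p False False - t))
      else (if i then (if c then Q True False - (p True False + p False False - Q False True - t) else p True False + p False False - Q False True - t)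
                else (if c then Q False False - t else t))))"

definition hallc :: "(bool \<Rightarrow> bool \<Rightarrow> real) \<Rightarrow> (bool \<Rightarrow> bool \<Rightarrow> real) \<Rightarrow> bool" where
  "hallc p Q \<longleftrightarrow> 0 \<le> Q False False \<and> 0 \<le> Q False True \<and> 0 \<le> Q True False \<and> 0 \<le> Q True True \<and>
     Q False False + Q False True + Q True False + Q True True = 1 \<and>
     0 \<le> p False False \<and> 0 \<le> p False True \<and> 0 \<le> p True False \<and> 0 \<le> p True True \<and>
     p False False + p False True + p True False + p True True = 1 \<and>
     p True True \<le> Q True False + Q True True \<and>
     p False False \<le> Q False False + Q False True \<and>
     p True False \<le> Q True False + Q False True \<and>
     p False True \<le> Q False False + Q True True \<and>
     Q True False \<le> p True False + p True True \<and>
     p True False + p True True \<le> 1 - Q False False \<and>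
     Q True True \<le> p False True + p True True \<and>
     p False True + p True True \<le> 1 - Q False True"

lemma tt_bounds:
  assumes h: "hallc p Q"
  defines "t \<equiv> tt p (Q False False) (Q False True) (Q True False) (Q True True)"
  shows "0 \<le> t" "p False False - Q False True \<le> t" "Q False False - p False True \<le> t"
    "p False False + p True False - Q False True - Q True False \<le> t"
    "t \<le> Q False False" "t \<le> p False False" "t \<le> Q False False + Q True True - p False True"
    "t \<le> p False False + p True False - Q False True"
proof -
  have H: "0 \<le> Q False False" "0 \<le> Q False True" "0 \<le> Q True False" "0 \<le> Q True True"
     "Q False False + Q False True + Q True False + Q True True = 1"
     "0 \<le> p False False" "0 \<le> p False True" "0 \<le> p True False" "0 \<le> p True True"
     "p False False + p False True + p True False + p True True = 1"
     "p True True \<le> Q True False + Q True True"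
     "p False False \<le> Q False False + Q False True"
     "p True False \<le> Q True False + Q False True"
     "p False True \<le> Q False False + Q True True"
     "Q True False \<le> p True False + p True True"
     "p True False + p True True \<le> 1 - Q False False"
     "Q True True \<le> p False True + p True True"
     "p False True + p True True \<le> 1 - Q False True"
    using h unfolding hallc_def by auto
  show "0 \<le> t" "p False False - Q False True \<le> t" "Q False False - p False True \<le> t"
    "p False False + p True False - Q False True - Q True False \<le> t"
    unfolding t_def tt_def by simp_all
  show "t \<le> Q False False" unfolding t_def tt_def max.bounded_iff
    apply (intro conjI)
    subgoal using H(1) by linarith
    subgoal using H(12) by linarith
    subgoal using H(7) by linarith
    subgoal using H(17) H(10) H(5) by linarith
    done
  show "t \<le> p False False" unfolding t_def tt_def max.bounded_iff
    apply (intro conjI)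
    subgoal using H(6) by linarith
    subgoal using H(2) by linarith
    subgoal using H(16) H(10) by linarith
    subgoal using H(13) by linarith
    done
  show "t \<le> Q False False + Q True True - p False True" unfolding t_def tt_def max.bounded_iff
    apply (intro conjI)
    subgoal using H(14) by linarith
    subgoal using H(15) H(10) H(5) by linarith
    subgoal using H(4) by linarith
    subgoal using H(9) H(10) H(5) by linarith
    done
  show "t \<le> p False False + p True False - Q False True" unfolding t_def tt_def max.bounded_iff
    apply (intro conjI)
    subgoal using H(18) H(10) by linarith
    subgoal using H(8) by linarith
    subgoal using H(11) H(10) H(5) by linarith
    subgoal using H(3) by linarith
    done
qed

lemma mass_nonneg: "hallc p Q \<Longrightarrow> 0 \<le> massf p Q i j c"
  using tt_bounds[of p Q] unfolding massf_def Let_def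
  by (cases i; cases j; cases c) simp_all

lemma mass_sum: "massf p Q i j True + massf p Q i j False = Q i j"
  unfolding massf_def Let_def by (cases i; cases j) simp_all

lemma mass_le: "hallc p Q \<Longrightarrow> massf p Q i j c \<le> Q i j"
  using mass_sum[of p Q i j] mass_nonneg[of p Q i j True] mass_nonneg[of p Q i j False]
  by (cases c) simp_all

lemma mass_p: "hallc p Q \<Longrightarrow> massf p Q a False b + massf p Q b True a = p a b"
  unfolding massf_def Let_def hallc_def by (cases a; cases b) simp_all

definition pairf :: "bool \<Rightarrow> bool \<Rightarrow> bool \<Rightarrow> bool \<times> bool" where
  "pairf i j c = (if j then (c, i) else (i, c))"

definition PS :: "(bool \<Rightarrow> bool \<Rightarrow> real) \<Rightarrow> (bool \<times> bool) set \<Rightarrow> real" where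
  "PS p S = (\<Sum>s\<in>UNIV. if s \<in> S then p (fst s) (snd s) else 0)"

lemma PS_nonneg: "(\<And>i j. 0 \<le> p i j) \<Longrightarrow> 0 \<le> PS p S"
  unfolding PS_def by (intro sum_nonneg) auto

lemma PS_single: "PS p {(a,b)} = p a b"
  unfolding PS_def sum_UNIV_bool2 by (cases a; cases b) simp_all

lemma PS_UNIV: "p False False + p False True + p True False + p True True = 1 \<Longrightarrow> PS p UNIV = 1"
  unfolding PS_def sum_UNIV_bool2 by simp

lemma mass_PS:
  assumes "hallc p Q"
  shows "(\<Sum>ij\<in>UNIV. (if pairf (fst ij) (snd ij) True \<in> S then massf p Q (fst ij) (snd ij) True else 0)
                     + (if pairf (fst ij) (snd ij) False \<in> S then massf p Q (fst ij) (snd ij) False else 0)) = PS p S"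
proof -
  have e: "p a b = massf p Q a False b + massf p Q b True a" for a b using mass_p[OF assms] by simp
  show ?thesis unfolding PS_def sum_UNIV_bool2 pairf_def
    by (simp add: e)
qed



lemma ennreal_helper:
  fixes q a b :: real
  assumes "0 \<le> q" "0 \<le> a" "0 \<le> b"
  shows "ennreal q * (indicator B z * ((if P then ennreal a else 0) + (if P' then ennreal b else 0)))
       = ennreal (indicator B z * ((if P then q * a else 0) + (if P' then q * b else 0)))"
  using assms
  by (cases "z \<in> B"; cases P; cases P') (simp_all add: ennreal_mult ennreal_plus distrib_left)

lemma part2:
  fixes M :: "'a measure"
    and Y D :: "'a \<Rightarrow> bool"
    and Z :: "'a \<Rightarrow> 'z::euclidean_space"
    and q :: "bool \<Rightarrow> bool \<Rightarrow> 'z \<Rightarrow> real"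
    and p :: "bool \<Rightarrow> bool \<Rightarrow> real"
  assumes PM: "prob_space M"
    and Ym[measurable]: "Y \<in> measurable M (count_space UNIV)"
    and Dm[measurable]: "D \<in> measurable M (count_space UNIV)"
    and Zm[measurable]: "Z \<in> borel_measurable M"
    and cp: "cond_prob_YD_given_Z M Y D Z q"
    and pn: "\<forall>i j. 0 \<le> p i j"
    and ps: "p False False + p False True + p True False + p True True = 1"
    and hall: "AE z in distr M borel Z.
           p True True \<le> q True False z + q True True z \<and>
           p False False \<le> q False False z + q False True z \<and>
           p True False \<le> q True False z + q False True z \<and>
           p False True \<le> q False False z + q True True z \<and>
           q True False z \<le> p True False + p True True \<and>
           p True False + p True True \<le> 1 - q False False z \<and>
           q True True z \<le> p False True + p True True \<and>
           p False True + p True True \<le> 1 - q False True z"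
  shows "\<exists>(M' :: ('a \<times> bool \<times> bool) measure) Yt Dt Zt Y0 Y1.
           prob_space M' \<and>
           Yt \<in> measurable M' (count_space UNIV) \<and>
           Dt \<in> measurable M' (count_space UNIV) \<and>
           Zt \<in> borel_measurable M' \<and>
           Y0 \<in> measurable M' (count_space UNIV) \<and>
           Y1 \<in> measurable M' (count_space UNIV) \<and>
           distr M' (count_space UNIV \<Otimes>\<^sub>M count_space UNIV \<Otimes>\<^sub>M borel)
                 (\<lambda>\<omega>. (Yt \<omega>, Dt \<omega>, Zt \<omega>))
             = distr M (count_space UNIV \<Otimes>\<^sub>M count_space UNIV \<Otimes>\<^sub>M borel)
                 (\<lambda>\<omega>. (Y \<omega>, D \<omega>, Z \<omega>)) \<and>
           indep_rv M' borel Zt (count_space UNIV) (\<lambda>\<omega>. (Y0 \<omega>, Y1 \<omega>)) \<and>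
           (\<forall>\<omega>\<in>space M'. Yt \<omega> = (if Dt \<omega> then Y1 \<omega> else Y0 \<omega>)) \<and>
           (\<forall>i j. measure M' {\<omega> \<in> space M'. Y0 \<omega> = i \<and> Y1 \<omega> = j} = p i j)"
proof -
  interpret prob_space M by fact
  define N where "N = distr M borel Z"
  have qm[measurable]: "q i j \<in> borel_measurable borel" for i j
    using cp unfolding cond_prob_YD_given_Z_def by auto
  have good: "AE z in N. hallc p (\<lambda>i j. q i j z)"
  proof -
    note q0 = q_props(1)[OF PM Ym Dm Zm cp] and q1 = q_props(2)[OF PM Ym Dm Zm cp]
    show ?thesis unfolding N_def
      using q0[of False False] q0[of False True] q0[of True False] q0[of True True] q1 hall
      by eventually_elim (use pn ps in \<open>simp add: hallc_def\<close>)
  qed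
  define W4 where "W4 i j c z = (if hallc p (\<lambda>i j. q i j z) \<and> 0 < q i j z then massf p (\<lambda>i j. q i j z) i j c / q i j z else (if c then 1 else 0))" for i j c z
  have W4nn: "0 \<le> W4 i j c z" for i j c z
    unfolding W4_def using mass_nonneg[of p "\<lambda>i j. q i j z" i j c] by auto
  have W4sum: "W4 i j True z + W4 i j False z = 1" for i j z
    unfolding W4_def using mass_sum[of p "\<lambda>i j. q i j z" i j] by (auto simp: add_divide_distrib[symmetric])
  have qnn_h: "hallc p Q \<Longrightarrow> 0 \<le> Q i j" for Q i j
    unfolding hallc_def by (cases i; cases j) simp_all
  have W4mass: "q i j z * W4 i j c z = massf p (\<lambda>i j. q i j z) i j c" if h: "hallc p (\<lambda>i j. q i j z)" for i j c z
  proof (cases "0 < q i j z")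
    case True then show ?thesis using h unfolding W4_def by simp
  next
    case False
    then have "q i j z = 0" using qnn_h[OF h, of i j] by simp
    moreover have "massf p (\<lambda>i j. q i j z) i j c = 0"
      using mass_nonneg[OF h, of i j c] mass_le[OF h, of i j c] \<open>q i j z = 0\<close> by simp
    ultimately show ?thesis by simp
  qed
  have hm[measurable]: "Measurable.pred borel (\<lambda>z. hallc p (\<lambda>i j. q i j z))"
    unfolding hallc_def by measurable
  have mm[measurable]: "(\<lambda>z. massf p (\<lambda>i j. q i j z) i j c) \<in> borel_measurable borel" for i j c
  proof -
    have ttm[measurable]: "(\<lambda>z. tt p (q False False z) (q False True z) (q True False z) (q True True z)) \<in> borel_measurable borel"
      unfolding tt_def by measurable
    show ?thesis
      apply (cases i; cases j; cases c)
      apply (simp_all only: massf_def Let_def if_True if_False)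
      apply measurable
      done
  qed
  have W4m[measurable]: "W4 i j c \<in> borel_measurable borel" for i j c
    unfolding W4_def by measurable
  define w' where "w' \<omega> c = W4 (Y \<omega>) (D \<omega>) c (Z \<omega>)" for \<omega> c
  have w'm: "(\<lambda>\<omega>. w' \<omega> c) \<in> borel_measurable M" for c
  proof -
    have a: "(\<lambda>\<omega>. W4 i j c (Z \<omega>)) \<in> borel_measurable M" for i j by measurable
    have b: "(\<lambda>\<omega>. W4 i (D \<omega>) c (Z \<omega>)) \<in> borel_measurable M" for i
      by (rule measurable_compose_countable[where f="\<lambda>j \<omega>. W4 i j c (Z \<omega>)", OF a Dm])
    show ?thesis unfolding w'_def
      by (rule measurable_compose_countable[where f="\<lambda>i \<omega>. W4 i (D \<omega>) c (Z \<omega>)", OF b Ym])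
  qed
  have w'nn: "0 \<le> w' \<omega> c" for \<omega> c unfolding w'_def by (rule W4nn)
  have w'sum: "w' \<omega> True + w' \<omega> False = 1" for \<omega> unfolding w'_def by (rule W4sum)
  define M' where "M' = density (M \<Otimes>\<^sub>M count_space UNIV) (\<lambda>x. ennreal (w' (fst x) (fst (snd x))) * indicator {True} (snd (snd x)))"
  note MC = mix_construction[OF PM w'm w'nn w'sum, folded M'_def]
  interpret P': prob_space M' by (rule MC(4))
  have mcong: "measurable M' K = measurable (M \<Otimes>\<^sub>M count_space UNIV) K" for K :: "'b measure"
    by (rule measurable_cong_sets[OF MC(1) refl])
  have m1: "(\<lambda>x. fst (snd x)) \<in> (M \<Otimes>\<^sub>M count_space (UNIV :: (bool\<times>bool) set)) \<rightarrow>\<^sub>M count_space UNIV"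
    by (rule measurable_compose[OF measurable_snd]) simp
  define Yt where "Yt x = Y (fst x)" for x :: "'a \<times> bool \<times> bool"
  define Dt where "Dt x = D (fst x)" for x :: "'a \<times> bool \<times> bool"
  define Zt where "Zt x = Z (fst x)" for x :: "'a \<times> bool \<times> bool"
  define Y0' where "Y0' x = (if D (fst x) then fst (snd x) else Y (fst x))" for x :: "'a \<times> bool \<times> bool"
  define Y1' where "Y1' x = (if D (fst x) then Y (fst x) else fst (snd x))" for x :: "'a \<times> bool \<times> bool"
  define W' where "W' x = (Y0' x, Y1' x)" for x
  have Ytm[measurable]: "Yt \<in> measurable M' (count_space UNIV)" unfolding mcong Yt_def by measurable
  have Dtm[measurable]: "Dt \<in> measurable M' (count_space UNIV)" unfolding mcong Dt_def by measurable
  have Ztm[measurable]: "Zt \<in> borel_measurable M'" unfolding mcong Zt_def by measurable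
  have Dfm: "(\<lambda>x. D (fst x)) \<in> (M \<Otimes>\<^sub>M count_space (UNIV :: (bool\<times>bool) set)) \<rightarrow>\<^sub>M count_space UNIV"
    by measurable
  have Y0m[measurable]: "Y0' \<in> measurable M' (count_space UNIV)" unfolding mcong Y0'_def
    by (rule measurable_compose_countable[where f="\<lambda>d x. if d then fst (snd x) else Y (fst x)", OF _ Dfm])
       (case_tac i; simp add: m1)
  have Y1m[measurable]: "Y1' \<in> measurable M' (count_space UNIV)" unfolding mcong Y1'_def
    by (rule measurable_compose_countable[where f="\<lambda>d x. if d then Y (fst x) else fst (snd x)", OF _ Dfm])
       (case_tac i; simp add: m1)
  have W'm[measurable]: "W' \<in> measurable M' (count_space UNIV)" unfolding W'_def
    by (simp add: measurable_pair_iff Y0m Y1m)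
  have spM': "space M' = space M \<times> UNIV" by (rule MC(2))
  have distr_eq: "distr M' (count_space UNIV \<Otimes>\<^sub>M count_space UNIV \<Otimes>\<^sub>M borel) (\<lambda>\<omega>. (Yt \<omega>, Dt \<omega>, Zt \<omega>))
      = distr M (count_space UNIV \<Otimes>\<^sub>M count_space UNIV \<Otimes>\<^sub>M borel) (\<lambda>\<omega>. (Y \<omega>, D \<omega>, Z \<omega>))"
  proof -
    have gm: "(\<lambda>\<omega>. (Y \<omega>, D \<omega>, Z \<omega>)) \<in> M \<rightarrow>\<^sub>M (count_space UNIV \<Otimes>\<^sub>M count_space UNIV \<Otimes>\<^sub>M borel)"
      by measurable
    have fm: "fst \<in> M' \<rightarrow>\<^sub>M M" unfolding mcong by simp
    have "distr (distr M' M fst) (count_space UNIV \<Otimes>\<^sub>M count_space UNIV \<Otimes>\<^sub>M borel) (\<lambda>\<omega>. (Y \<omega>, D \<omega>, Z \<omega>))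
        = distr M' (count_space UNIV \<Otimes>\<^sub>M count_space UNIV \<Otimes>\<^sub>M borel) ((\<lambda>\<omega>. (Y \<omega>, D \<omega>, Z \<omega>)) \<circ> fst)"
      by (rule distr_distr[OF gm fm])
    then show ?thesis using MC(5) by (simp add: comp_def Yt_def Dt_def Zt_def)
  qed
  have cons': "\<forall>\<omega>\<in>space M'. Yt \<omega> = (if Dt \<omega> then Y1' \<omega> else Y0' \<omega>)"
    unfolding Yt_def Dt_def Y0'_def Y1'_def by simp
  interpret N: prob_space N unfolding N_def by (rule prob_space_distr) simp
  have Nm: "measurable N K = measurable borel K" for K :: "'b measure"
    unfolding N_def by (rule measurable_cong_sets) simp_all
  define R where "R S B i j z = (indicator B z :: ennreal) * ((if pairf i j True \<in> S then ennreal (W4 i j True z) else 0) + (if pairf i j False \<in> S then ennreal (W4 i j False z) else 0))"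
    for S B i j z
  have key: "emeasure M' (Zt -` B \<inter> space M' \<inter> (W' -` S \<inter> space M')) = ennreal (PS p S) * emeasure N B"
    if B[measurable]: "B \<in> sets borel" for B S
  proof -
    define X where "X = Zt -` B \<inter> space M' \<inter> (W' -` S \<inter> space M')"
    have Xs: "X \<in> sets M'" unfolding X_def
      by (intro sets.Int measurable_sets[OF Ztm] measurable_sets[OF W'm]) (simp_all add: B)
    define C where "C i j = {\<omega> \<in> space M. Y \<omega> = i \<and> D \<omega> = j}" for i j
    have Cm[measurable]: "C i j \<in> sets M" for i j unfolding C_def by measurable
    have Rm[measurable]: "R S B i j \<in> borel_measurable borel" for i j unfolding R_def by measurable
    have "emeasure M' X = (\<integral>\<^sup>+\<omega>. ennreal (w' \<omega> True) * indicator X (\<omega>,True,True) + ennreal (w' \<omega> False) * indicator X (\<omega>,False,True) \<partial>M)"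
      by (rule MC(3)[OF Xs])
    also have "\<dots> = (\<integral>\<^sup>+\<omega>. (\<Sum>ij\<in>UNIV. indicator (C (fst ij) (snd ij)) \<omega> * R S B (fst ij) (snd ij) (Z \<omega>)) \<partial>M)"
    proof (rule nn_integral_cong)
      fix \<omega> assume \<omega>: "\<omega> \<in> space M"
      have memX: "(\<omega>, c, True) \<in> X \<longleftrightarrow> Z \<omega> \<in> B \<and> pairf (Y \<omega>) (D \<omega>) c \<in> S" for c
        using \<omega> unfolding X_def spM' Zt_def W'_def Y0'_def Y1'_def pairf_def by auto
      show "ennreal (w' \<omega> True) * indicator X (\<omega>,True,True) + ennreal (w' \<omega> False) * indicator X (\<omega>,False,True)
          = (\<Sum>ij\<in>UNIV. indicator (C (fst ij) (snd ij)) \<omega> * R S B (fst ij) (snd ij) (Z \<omega>))"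
        unfolding sum_UNIV_bool2 R_def C_def w'_def indicator_def memX
        using \<omega> by (cases "Y \<omega>"; cases "D \<omega>"; cases "Z \<omega> \<in> B") simp_all
    qed
    also have "\<dots> = (\<Sum>ij\<in>UNIV. \<integral>\<^sup>+\<omega>. indicator (C (fst ij) (snd ij)) \<omega> * R S B (fst ij) (snd ij) (Z \<omega>) \<partial>M)"
      by (rule nn_integral_sum) measurable
    also have "\<dots> = (\<Sum>ij\<in>UNIV. \<integral>\<^sup>+z. ennreal (q (fst ij) (snd ij) z) * R S B (fst ij) (snd ij) z \<partial>N)"
      unfolding C_def N_def by (intro sum.cong refl cell_integral[OF PM Ym Dm Zm cp Rm])
    also have "\<dots> = (\<integral>\<^sup>+z. (\<Sum>ij\<in>UNIV. ennreal (q (fst ij) (snd ij) z) * R S B (fst ij) (snd ij) z) \<partial>N)"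
      by (rule nn_integral_sum[symmetric]) (unfold Nm, measurable)
    also have "\<dots> = (\<integral>\<^sup>+z. ennreal (PS p S) * indicator B z \<partial>N)"
    proof (rule nn_integral_cong_AE)
      show "AE z in N. (\<Sum>ij\<in>UNIV. ennreal (q (fst ij) (snd ij) z) * R S B (fst ij) (snd ij) z) = ennreal (PS p S) * indicator B z"
        using good
      proof eventually_elim
        fix z assume h: "hallc p (\<lambda>i j. q i j z)"
        define T where "T i j = (if pairf i j True \<in> S then massf p (\<lambda>i j. q i j z) i j True else 0) + (if pairf i j False \<in> S then massf p (\<lambda>i j. q i j z) i j False else 0)" for i j
        have Tn: "0 \<le> T i j" for i j unfolding T_def using mass_nonneg[OF h] by simp
        have e1: "ennreal (q i j z) * R S B i j z = ennreal (indicator B z * T i j)" for i j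
          unfolding R_def T_def W4mass[OF h, symmetric] by (rule ennreal_helper) (rule qnn_h[OF h], rule W4nn, rule W4nn)
        have "(\<Sum>ij\<in>UNIV. ennreal (q (fst ij) (snd ij) z) * R S B (fst ij) (snd ij) z) = (\<Sum>ij\<in>UNIV. ennreal (indicator B z * T (fst ij) (snd ij)))"
          by (simp only: e1)
        also have "\<dots> = ennreal (\<Sum>ij\<in>UNIV. indicator B z * T (fst ij) (snd ij))"
          by (rule sum_ennreal) (simp add: Tn)
        also have "(\<Sum>ij\<in>UNIV. indicator B z * T (fst ij) (snd ij)) = indicator B z * PS p S"
          using mass_PS[OF h, of S] unfolding T_def by (simp add: sum_distrib_left[symmetric])
        finally show "(\<Sum>ij\<in>UNIV. ennreal (q (fst ij) (snd ij) z) * R S B (fst ij) (snd ij) z) = ennreal (PS p S) * indicator B z"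
          by (cases "z \<in> B") simp_all
      qed
    qed
    also have "\<dots> = ennreal (PS p S) * emeasure N B"
      by (rule nn_integral_cmult_indicator) (simp add: N_def)
    finally show ?thesis unfolding X_def .
  qed
  have PSn: "0 \<le> PS p S" for S by (rule PS_nonneg) (use pn in auto)
  have keyr: "measure M' (Zt -` B \<inter> space M' \<inter> (W' -` S \<inter> space M')) = PS p S * measure N B"
    if B: "B \<in> sets borel" for B S
  proof -
    have "ennreal (measure M' (Zt -` B \<inter> space M' \<inter> (W' -` S \<inter> space M'))) = ennreal (PS p S * measure N B)"
      using key[OF B, of S] PSn[of S] by (simp add: P'.emeasure_eq_measure N.emeasure_eq_measure ennreal_mult)
    then show ?thesis using PSn[of S] by (simp add: ennreal_inj)
  qed
  have mW: "measure M' (W' -` S \<inter> space M') = PS p S" for S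
  proof -
    have "Zt -` UNIV \<inter> space M' \<inter> (W' -` S \<inter> space M') = W' -` S \<inter> space M'" by auto
    moreover have "measure N UNIV = 1" using N.prob_space by (simp add: N_def)
    ultimately show ?thesis using keyr[of UNIV S] by simp
  qed
  have mZ: "measure M' (Zt -` B \<inter> space M') = measure N B" if B: "B \<in> sets borel" for B
  proof -
    have "Zt -` B \<inter> space M' \<inter> (W' -` UNIV \<inter> space M') = Zt -` B \<inter> space M'" by auto
    then show ?thesis using keyr[OF B, of UNIV] PS_UNIV[OF ps] by simp
  qed
  have indep: "indep_rv M' borel Zt (count_space UNIV) W'"
    unfolding indep_rv_def
  proof (intro conjI Ztm W'm P'.indep_setI)
    show "{Zt -` A \<inter> space M' |A. A \<in> sets borel} \<subseteq> P'.events" using Ztm by (auto intro: measurable_sets)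
    show "{W' -` A \<inter> space M' |A. A \<in> sets (count_space UNIV)} \<subseteq> P'.events" using W'm by (auto intro: measurable_sets)
    fix a b assume a: "a \<in> {Zt -` A \<inter> space M' |A. A \<in> sets borel}"
      and b: "b \<in> {W' -` A \<inter> space M' |A. A \<in> sets (count_space UNIV)}"
    obtain A where A: "A \<in> sets borel" "a = Zt -` A \<inter> space M'" using a by blast
    obtain S where S: "b = W' -` S \<inter> space M'" using b by blast
    show "P'.prob (a \<inter> b) = P'.prob a * P'.prob b"
      unfolding A(2) S using keyr[OF A(1), of S] mW[of S] mZ[OF A(1)] by simp
  qed
  have fin: "measure M' {\<omega> \<in> space M'. Y0' \<omega> = i \<and> Y1' \<omega> = j} = p i j" for i j
  proof -
    have "{\<omega> \<in> space M'. Y0' \<omega> = i \<and> Y1' \<omega> = j} = W' -` {(i,j)} \<inter> space M'" unfolding W'_def by auto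
    then show ?thesis using mW[of "{(i,j)}"] PS_single[of p i j] by simp
  qed
  have Weq: "W' = (\<lambda>\<omega>. (Y0' \<omega>, Y1' \<omega>))" unfolding W'_def by simp
  show ?thesis
    apply (rule exI[of _ M'], rule exI[of _ Yt], rule exI[of _ Dt], rule exI[of _ Zt], rule exI[of _ Y0'], rule exI[of _ Y1'])
    using MC(4) Ytm Dtm Ztm Y0m Y1m distr_eq indep[unfolded Weq] cons' fin by blast
qed

theorem theorem2:
  fixes M :: "'a measure"
    and Y D :: "'a \<Rightarrow> bool"
    and Z :: "'a \<Rightarrow> 'z::euclidean_space"
    and q :: "bool \<Rightarrow> bool \<Rightarrow> 'z \<Rightarrow> real"
  assumes "prob_space M"
    and "Y \<in> measurable M (count_space UNIV)"
    and "D \<in> measurable M (count_space UNIV)"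
    and "Z \<in> borel_measurable M"
    and "cond_prob_YD_given_Z M Y D Z q"
  shows
    "(\<forall>Y0 Y1 :: 'a \<Rightarrow> bool.
        Y0 \<in> measurable M (count_space UNIV) \<and>
        Y1 \<in> measurable M (count_space UNIV) \<and>
        indep_rv M borel Z (count_space UNIV) (\<lambda>\<omega>. (Y0 \<omega>, Y1 \<omega>)) \<and>
        (\<forall>\<omega>\<in>space M. Y \<omega> = (if D \<omega> then Y1 \<omega> else Y0 \<omega>))
      \<longrightarrow>
        (AE z in distr M borel Z.
          (let P = (\<lambda>a b. measure M {\<omega> \<in> space M. Y0 \<omega> = a \<and> Y1 \<omega> = b}) in
           0 \<le> P True True \<and> P True True \<le> q True False z + q True True z \<and>
           0 \<le> P False False \<and> P False False \<le> q False False z + q False True z \<and>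
           0 \<le> P True False \<and> P True False \<le> q True False z + q False True z \<and>
           0 \<le> P False True \<and> P False True \<le> q False False z + q True True z \<and>
           q True False z \<le> measure M {\<omega> \<in> space M. Y0 \<omega>} \<and>
           measure M {\<omega> \<in> space M. Y0 \<omega>} \<le> 1 - q False False z \<and>
           q True True z \<le> measure M {\<omega> \<in> space M. Y1 \<omega>} \<and>
           measure M {\<omega> \<in> space M. Y1 \<omega>} \<le> 1 - q False True z)))
   \<and>
    (\<forall>p :: bool \<Rightarrow> bool \<Rightarrow> real.
        (\<forall>i j. 0 \<le> p i j) \<and>
        p False False + p False True + p True False + p True True = 1 \<and>
        (AE z in distr M borel Z.
           p True True \<le> q True False z + q True True z \<and>
           p False False \<le> q False False z + q False True z \<and>
           p True False \<le> q True False z + q False True z \<and>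
           p False True \<le> q False False z + q True True z \<and>
           q True False z \<le> p True False + p True True \<and>
           p True False + p True True \<le> 1 - q False False z \<and>
           q True True z \<le> p False True + p True True \<and>
           p False True + p True True \<le> 1 - q False True z)
      \<longrightarrow>
        (\<exists>(M' :: ('a \<times> bool \<times> bool) measure) Yt Dt Zt Y0 Y1.
           prob_space M' \<and>
           Yt \<in> measurable M' (count_space UNIV) \<and>
           Dt \<in> measurable M' (count_space UNIV) \<and>
           Zt \<in> borel_measurable M' \<and>
           Y0 \<in> measurable M' (count_space UNIV) \<and>
           Y1 \<in> measurable M' (count_space UNIV) \<and>
           distr M' (count_space UNIV \<Otimes>\<^sub>M count_space UNIV \<Otimes>\<^sub>M borel)
                 (\<lambda>\<omega>. (Yt \<omega>, Dt \<omega>, Zt \<omega>))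
             = distr M (count_space UNIV \<Otimes>\<^sub>M count_space UNIV \<Otimes>\<^sub>M borel)
                 (\<lambda>\<omega>. (Y \<omega>, D \<omega>, Z \<omega>)) \<and>
           indep_rv M' borel Zt (count_space UNIV) (\<lambda>\<omega>. (Y0 \<omega>, Y1 \<omega>)) \<and>
           (\<forall>\<omega>\<in>space M'. Yt \<omega> = (if Dt \<omega> then Y1 \<omega> else Y0 \<omega>)) \<and>
           (\<forall>i j. measure M' {\<omega> \<in> space M'. Y0 \<omega> = i \<and> Y1 \<omega> = j} = p i j)))"
  proof (intro conjI allI impI)
  fix Y0 Y1 :: "'a \<Rightarrow> bool"
  assume h: "Y0 \<in> measurable M (count_space UNIV) \<and>
        Y1 \<in> measurable M (count_space UNIV) \<and>
        indep_rv M borel Z (count_space UNIV) (\<lambda>\<omega>. (Y0 \<omega>, Y1 \<omega>)) \<and>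
        (\<forall>\<omega>\<in>space M. Y \<omega> = (if D \<omega> then Y1 \<omega> else Y0 \<omega>))"
  show "AE z in distr M borel Z.
          (let P = (\<lambda>a b. measure M {\<omega> \<in> space M. Y0 \<omega> = a \<and> Y1 \<omega> = b}) in
           0 \<le> P True True \<and> P True True \<le> q True False z + q True True z \<and>
           0 \<le> P False False \<and> P False False \<le> q False False z + q False True z \<and>
           0 \<le> P True False \<and> P True False \<le> q True False z + q False True z \<and>
           0 \<le> P False True \<and> P False True \<le> q False False z + q True True z \<and>
           q True False z \<le> measure M {\<omega> \<in> space M. Y0 \<omega>} \<and>
           measure M {\<omega> \<in> space M. Y0 \<omega>} \<le> 1 - q False False z \<and>
           q True True z \<le> measure M {\<omega> \<in> space M. Y1 \<omega>} \<and>
           measure M {\<omega> \<in> space M. Y1 \<omega>} \<le> 1 - q False True z)"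
    using h by (intro part1[OF assms(1) assms(2) assms(3) assms(4) assms(5)]) auto
next
  fix p :: "bool \<Rightarrow> bool \<Rightarrow> real"
  assume h: "(\<forall>i j. 0 \<le> p i j) \<and>
        p False False + p False True + p True False + p True True = 1 \<and>
        (AE z in distr M borel Z.
           p True True \<le> q True False z + q True True z \<and>
           p False False \<le> q False False z + q False True z \<and>
           p True False \<le> q True False z + q False True z \<and>
           p False True \<le> q False False z + q True True z \<and>
           q True False z \<le> p True False + p True True \<and>
           p True False + p True True \<le> 1 - q False False z \<and>
           q True True z \<le> p False True + p True True \<and>
           p False True + p True True \<le> 1 - q False True z)"
  show "\<exists>(M' :: ('a \<times> bool \<times> bool) measure) Yt Dt Zt Y0 Y1.
           prob_space M' \<and>
           Yt \<in> measurable M' (count_space UNIV) \<and>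
           Dt \<in> measurable M' (count_space UNIV) \<and>
           Zt \<in> borel_measurable M' \<and>
           Y0 \<in> measurable M' (count_space UNIV) \<and>
           Y1 \<in> measurable M' (count_space UNIV) \<and>
           distr M' (count_space UNIV \<Otimes>\<^sub>M count_space UNIV \<Otimes>\<^sub>M borel)
                 (\<lambda>\<omega>. (Yt \<omega>, Dt \<omega>, Zt \<omega>))
             = distr M (count_space UNIV \<Otimes>\<^sub>M count_space UNIV \<Otimes>\<^sub>M borel)
                 (\<lambda>\<omega>. (Y \<omega>, D \<omega>, Z \<omega>)) \<and>
           indep_rv M' borel Zt (count_space UNIV) (\<lambda>\<omega>. (Y0 \<omega>, Y1 \<omega>)) \<and>
           (\<forall>\<omega>\<in>space M'. Yt \<omega> = (if Dt \<omega> then Y1 \<omega> else Y0 \<omega>)) \<and>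
           (\<forall>i j. measure M' {\<omega> \<in> space M'. Y0 \<omega> = i \<and> Y1 \<omega> = j} = p i j)"
    using h by (intro part2[OF assms(1) assms(2) assms(3) assms(4) assms(5)]) auto
qed

end
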